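(* Let $k\le l$ be positive integers with $\gcd(k,l)=1$, let $n\ge1$ and $m\ge0$ be integers, and write $m=qn+r$ with integers $q\ge 0$, $0\le r<n$. Then $$U^{k,l}(m,n)= \max\bigl(nkq,\ nkq+r(k+l)-nl\bigr).$$
   Context: $\mathcal D^{k,l}(m,n)$ denotes the set of all $nk\times nl$ matrices with nonnegative integer entries all of whose row sums equal $ml$ and all of whose column sums equal $mk$. For an $s\times t$ matrix $A=(a_{ij})$ with $s\le t$, a transversal of $A$ is a set of entries $T=\{a_{1i_1},\dots,a_{si_s}\}$ with $i_1,\dots,i_s\in\{1,\dots,t\}$ pairwise distinct, and $|T|=a_{1i_1}+\cdots+a_{si_s}$. Define ${\rm tropdet}(A)=\min_T|T|$ over all transversals $T$ of $A$, and $U^{k,l}(m,n)=\max_{A\in\mathcal D^{k,l}(m,n)}{\rm tropdet}(A)$. *)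

theory Defs
  imports Main
begin

(* An s x t matrix with nonnegative integer entries is a function
   A :: nat => nat => nat, entry (i,j) being A i j for i < s, j < t.
   Indices run from 0. *)

definition transversals :: "nat \<Rightarrow> nat \<Rightarrow> (nat \<Rightarrow> nat) set" where
  "transversals s t = {\<sigma>. \<sigma> ` {0..<s} \<subseteq> {0..<t} \<and> inj_on \<sigma> {0..<s}}"

definition tropdet :: "nat \<Rightarrow> nat \<Rightarrow> (nat \<Rightarrow> nat \<Rightarrow> nat) \<Rightarrow> nat" where
  "tropdet s t A = Min {(\<Sum>i<s. A i (\<sigma> i)) | \<sigma>. \<sigma> \<in> transversals s t}"

(* D^{k,l}(m,n): nk x nl nonnegative integer matrices, row sums ml, column sums mk.
   Entries outside the index range are normalised to 0 so each matrix has a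
   unique representative. *)
definition Dkl :: "nat \<Rightarrow> nat \<Rightarrow> nat \<Rightarrow> nat \<Rightarrow> (nat \<Rightarrow> nat \<Rightarrow> nat) set" where
  "Dkl k l m n = {A. (\<forall>i j. (i \<ge> n*k \<or> j \<ge> n*l) \<longrightarrow> A i j = 0)
      \<and> (\<forall>i<n*k. (\<Sum>j<n*l. A i j) = m*l)
      \<and> (\<forall>j<n*l. (\<Sum>i<n*k. A i j) = m*k)}"

definition Ukl :: "nat \<Rightarrow> nat \<Rightarrow> nat \<Rightarrow> nat \<Rightarrow> nat" where
  "Ukl k l m n = Max {tropdet (n*k) (n*l) A | A. A \<in> Dkl k l m n}"

end

theory Submission
  imports Defs
begin

lemma hall:
  assumes "finite I" "\<forall>i\<in>I. finite (A i)" "\<forall>J\<subseteq>I. card J \<le> card (\<Union>(A ` J))"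
  shows "\<exists>f. inj_on f I \<and> (\<forall>i\<in>I. f i \<in> A i)"
  using assms
proof (induction "card I" arbitrary: I A rule: less_induct)
  case less
  show ?case
  proof (cases "I = {}")
    case True then show ?thesis by auto
  next
    case False
    show ?thesis
    proof (cases "\<exists>J. J \<subseteq> I \<and> J \<noteq> {} \<and> J \<noteq> I \<and> card (\<Union>(A ` J)) \<le> card J")
      case True
      then obtain J where J: "J \<subseteq> I" "J \<noteq> {}" "J \<noteq> I" "card (\<Union>(A ` J)) \<le> card J" by blast
      define U where "U = \<Union>(A ` J)"
      have fJ: "finite J" using J(1) less.prems(1) finite_subset by blast
      have fU: "finite U" unfolding U_def using fJ J(1) less.prems(2) by blast
      have cJ: "card J < card I" using J less.prems(1) psubset_card_mono by blast
      have hJ: "\<forall>J'\<subseteq>J. card J' \<le> card (\<Union>(A ` J'))" using less.prems(3) J(1) by blast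
      have fAJ: "\<forall>i\<in>J. finite (A i)" using less.prems(2) J(1) by blast
      obtain f1 where f1: "inj_on f1 J" "\<forall>i\<in>J. f1 i \<in> A i"
        using less.hyps[OF cJ fJ fAJ hJ] by blast
      define B where "B i = A i - U" for i
      define K where "K = I - J"
      have cK: "card K < card I"
      proof -
        have "card (I - J) = card I - card J" using card_Diff_subset[OF fJ J(1)] .
        moreover have "card J > 0" using fJ J(2) by (simp add: card_gt_0_iff)
        moreover have "card J \<le> card I" using card_mono[OF less.prems(1) J(1)] .
        ultimately show ?thesis unfolding K_def by linarith
      qed
      have fK: "finite K" unfolding K_def using less.prems(1) by blast
      have hallK: "\<forall>L\<subseteq>K. card L \<le> card (\<Union>(B ` L))"
      proof (intro allI impI)
        fix L assume L: "L \<subseteq> K"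
        have fL: "finite L" using L fK finite_subset by blast
        have LJ: "L \<inter> J = {}" using L unfolding K_def by blast
        have sub: "L \<union> J \<subseteq> I" using L J(1) unfolding K_def by blast
        have eq: "\<Union>(B ` L) = \<Union>(A ` (L \<union> J)) - U" unfolding B_def U_def by blast
        have fLJ: "finite (\<Union>(A ` (L \<union> J)))" using sub less.prems(1,2)
          by (meson finite_UN_I finite_subset subsetD)
        have Usub: "U \<subseteq> \<Union>(A ` (L \<union> J))" unfolding U_def by blast
        have "card (\<Union>(B ` L)) = card (\<Union>(A ` (L \<union> J))) - card U"
          using eq card_Diff_subset[OF fU Usub] by simp
        moreover have "card (L \<union> J) \<le> card (\<Union>(A ` (L \<union> J)))" using less.prems(3) sub by blast
        moreover have "card (L \<union> J) = card L + card J" using card_Un_disjoint[OF fL fJ LJ] .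
        ultimately show "card L \<le> card (\<Union>(B ` L))" using J(4) unfolding U_def by linarith
      qed
      have fB: "\<forall>i\<in>K. finite (B i)" unfolding B_def K_def using less.prems(2) by blast
      obtain f2 where f2: "inj_on f2 K" "\<forall>i\<in>K. f2 i \<in> B i"
        using less.hyps[OF cK fK fB hallK] by blast
      define f where "f i = (if i \<in> J then f1 i else f2 i)" for i
      have "inj_on f I"
      proof (rule inj_onI)
        fix x y assume xy: "x \<in> I" "y \<in> I" "f x = f y"
        show "x = y"
        proof (cases "x \<in> J"; cases "y \<in> J")
          assume "x \<in> J" "y \<in> J" then show ?thesis using xy f1(1) unfolding f_def by (simp add: inj_on_def)
        next
          assume a: "x \<in> J" "y \<notin> J"
          have "f x \<in> U" using a f1(2) unfolding f_def U_def by auto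
          moreover have "f y \<notin> U" using a xy(2) f2(2) unfolding f_def U_def B_def K_def by auto
          ultimately show ?thesis using xy(3) by auto
        next
          assume a: "x \<notin> J" "y \<in> J"
          have "f y \<in> U" using a f1(2) unfolding f_def U_def by auto
          moreover have "f x \<notin> U" using a xy(1) f2(2) unfolding f_def U_def B_def K_def by auto
          ultimately show ?thesis using xy(3) by auto
        next
          assume "x \<notin> J" "y \<notin> J" then show ?thesis using xy f2(1) unfolding f_def K_def by (simp add: inj_on_def)
        qed
      qed
      moreover have "\<forall>i\<in>I. f i \<in> A i" using f1(2) f2(2) unfolding f_def B_def K_def by auto
      ultimately show ?thesis by blast
    next
      case False
      then have strict: "\<And>J. J \<subseteq> I \<Longrightarrow> J \<noteq> {} \<Longrightarrow> J \<noteq> I \<Longrightarrow> card J < card (\<Union>(A ` J))"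
        by (meson not_le)
      obtain i0 where i0: "i0 \<in> I" using \<open>I \<noteq> {}\<close> by blast
      have "card {i0} \<le> card (\<Union>(A ` {i0}))" using less.prems(3) i0 by blast
      then have "A i0 \<noteq> {}" by auto
      then obtain x where x: "x \<in> A i0" by blast
      define B where "B i = A i - {x}" for i
      define K where "K = I - {i0}"
      have cK: "card K < card I" unfolding K_def using card_Diff1_less[OF less.prems(1) i0] .
      have fK: "finite K" unfolding K_def using less.prems(1) by blast
      have fB: "\<forall>i\<in>K. finite (B i)" unfolding B_def K_def using less.prems(2) by blast
      have hallK: "\<forall>L\<subseteq>K. card L \<le> card (\<Union>(B ` L))"
      proof (intro allI impI)
        fix L assume L: "L \<subseteq> K"
        show "card L \<le> card (\<Union>(B ` L))"
        proof (cases "L = {}")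
          case True then show ?thesis by simp
        next
          case False
          have LI: "L \<subseteq> I" "L \<noteq> I" using L i0 unfolding K_def by auto
          have lt: "card L < card (\<Union>(A ` L))" using strict[OF LI(1) False LI(2)] .
          have eq: "\<Union>(B ` L) = \<Union>(A ` L) - {x}" unfolding B_def by blast
          have "card (\<Union>(A ` L)) - 1 \<le> card (\<Union>(A ` L) - {x})"
            by (metis card_Diff1_le card_Diff_singleton card_Diff_singleton_if diff_le_self le_refl)
          then show ?thesis using lt unfolding eq by linarith
        qed
      qed
      obtain f2 where f2: "inj_on f2 K" "\<forall>i\<in>K. f2 i \<in> B i"
        using less.hyps[OF cK fK fB hallK] by blast
      define f where "f = f2(i0 := x)"
      have "inj_on f I"
      proof -
        have "I = insert i0 K" unfolding K_def using i0 by blast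
        moreover have "x \<notin> f2 ` K" using f2(2) unfolding B_def by auto
        moreover have "inj_on f K" using f2(1) unfolding f_def K_def by (simp add: inj_on_def)
        moreover have "f ` K = f2 ` K" unfolding f_def K_def by auto
        moreover have "K - {i0} = K" unfolding K_def by blast
        moreover have "f i0 = x" unfolding f_def by simp
        ultimately show ?thesis using inj_on_insert[of f i0 K] by simp
      qed
      moreover have "\<forall>i\<in>I. f i \<in> A i" using f2(2) x unfolding f_def B_def K_def by auto
      ultimately show ?thesis by blast
    qed
  qed
qed

lemma sum_if_card: "finite A \<Longrightarrow> (\<Sum>i\<in>A. (if i \<in> S then c else 0::int)) = c * int (card (A \<inter> S))"
  by (simp add: sum.If_cases)

lemma egervary:
  fixes a :: "nat \<Rightarrow> nat \<Rightarrow> nat" and M :: nat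
  shows "\<exists>\<pi> u v. bij_betw \<pi> {..<M} {..<M} \<and> (\<forall>i<M. \<forall>j<M. u i + v j \<le> int (a i j))
     \<and> (\<Sum>i<M. int (a i (\<pi> i))) \<le> (\<Sum>i<M. u i) + (\<Sum>j<M. (v j :: int))"
proof (induction "\<Sum>i<M. \<Sum>j<M. a i j" arbitrary: a rule: less_induct)
  case less
  define Z where "Z i = {j. j < M \<and> a i j = 0}" for i
  have fZ: "\<forall>i\<in>{..<M}. finite (Z i)" unfolding Z_def by auto
  show ?case
  proof (cases "\<forall>J\<subseteq>{..<M}. card J \<le> card (\<Union>(Z ` J))")
    case True
    obtain f where f: "inj_on f {..<M}" "\<forall>i\<in>{..<M}. f i \<in> Z i"
      using hall[OF _ fZ True] by blast
    have "f ` {..<M} \<subseteq> {..<M}" using f(2) unfolding Z_def by auto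
    then have "f ` {..<M} = {..<M}" using endo_inj_surj[OF _ _ f(1)] by blast
    then have bij: "bij_betw f {..<M} {..<M}" using f(1) unfolding bij_betw_def by blast
    have "(\<Sum>i<M. int (a i (f i))) = 0" using f(2) unfolding Z_def by simp
    then show ?thesis using bij
      by (intro exI[of _ f] exI[of _ "\<lambda>_. 0"] exI[of _ "\<lambda>_. 0"]) simp
  next
    case False
    then obtain S where S: "S \<subseteq> {..<M}" "card (\<Union>(Z ` S)) < card S" by (meson not_le)
    define G where "G = \<Union>(Z ` S)"
    have GM: "G \<subseteq> {..<M}" unfolding G_def Z_def by auto
    have GS: "card G < card S" using S(2) unfolding G_def .
    define ind :: "nat set \<Rightarrow> nat \<Rightarrow> int" where "ind X x = (if x \<in> X then 1 else 0)" for X x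
    define a' where "a' i j = nat (int (a i j) - ind S i + ind G j)" for i j
    have pos: "int (a i j) - ind S i + ind G j \<ge> 0" if "i < M" "j < M" for i j
    proof (cases "i \<in> S \<and> j \<notin> G")
      case True
      then have "a i j \<noteq> 0" using that unfolding G_def Z_def by auto
      then show ?thesis using True unfolding ind_def by simp
    next
      case False
      then show ?thesis unfolding ind_def by auto
    qed
    have a'eq: "int (a' i j) = int (a i j) - ind S i + ind G j" if "i < M" "j < M" for i j
      using pos[OF that] unfolding a'_def by simp
    have sumS: "(\<Sum>i<M. ind S i) = int (card S)"
      using sum_if_card[of "{..<M}" S 1] S(1) unfolding ind_def by (simp add: Int_absorb1)
    have sumG: "(\<Sum>j<M. ind G j) = int (card G)"
      using sum_if_card[of "{..<M}" G 1] GM unfolding ind_def by (simp add: Int_absorb1)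
    have "(\<Sum>i<M. \<Sum>j<M. int (a' i j)) = (\<Sum>i<M. \<Sum>j<M. (int (a i j) - ind S i + ind G j))"
      using a'eq by simp
    also have "\<dots> = (\<Sum>i<M. \<Sum>j<M. int (a i j)) - int M * int (card S) + int M * int (card G)"
      by (simp add: sum.distrib sum_subtractf sumS sumG sum.swap[of "\<lambda>i j. ind S i"] mult.commute, simp add: sumS flip: sum_distrib_left)
    finally have tot: "(\<Sum>i<M. \<Sum>j<M. int (a' i j)) = (\<Sum>i<M. \<Sum>j<M. int (a i j)) - int M * int (card S) + int M * int (card G)" .
    have "M > 0" using GS S(1) by (metis card_lessThan card_mono finite_lessThan gr_zeroI le_zero_eq not_less_zero)
    then have "int M * int (card G) < int M * int (card S)" using GS by simp
    then have "(\<Sum>i<M. \<Sum>j<M. int (a' i j)) < (\<Sum>i<M. \<Sum>j<M. int (a i j))" using tot by linarith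
    then have lt: "(\<Sum>i<M. \<Sum>j<M. a' i j) < (\<Sum>i<M. \<Sum>j<M. a i j)"
      by (simp flip: of_nat_sum)
    obtain \<pi> u' v' where IH: "bij_betw \<pi> {..<M} {..<M}" "\<forall>i<M. \<forall>j<M. u' i + v' j \<le> int (a' i j)"
      "(\<Sum>i<M. int (a' i (\<pi> i))) \<le> (\<Sum>i<M. u' i) + (\<Sum>j<M. (v' j :: int))"
      using less.hyps[OF lt] by blast
    define u where "u i = u' i + ind S i" for i
    define v where "v j = v' j - ind G j" for j
    have feas: "\<forall>i<M. \<forall>j<M. u i + v j \<le> int (a i j)"
      using IH(2) a'eq unfolding u_def v_def by fastforce
    have piM: "\<pi> i < M" if "i < M" for i using IH(1) that unfolding bij_betw_def by auto
    have "(\<Sum>i<M. ind G (\<pi> i)) = (\<Sum>j<M. ind G j)"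
      using sum.reindex_bij_betw[OF IH(1), of "ind G"] by simp
    have "(\<Sum>i<M. int (a i (\<pi> i))) = (\<Sum>i<M. int (a' i (\<pi> i)) + ind S i - ind G (\<pi> i))"
      using a'eq piM by simp
    also have "\<dots> = (\<Sum>i<M. int (a' i (\<pi> i))) + int (card S) - int (card G)"
      using sumS sumG \<open>(\<Sum>i<M. ind G (\<pi> i)) = (\<Sum>j<M. ind G j)\<close>
      by (simp add: sum.distrib sum_subtractf)
    also have "\<dots> \<le> (\<Sum>i<M. u i) + (\<Sum>j<M. v j)"
      using IH(3) sumS sumG unfolding u_def v_def by (simp add: sum.distrib sum_subtractf)
    finally show ?thesis using IH(1) feas by blast
  qed
qed

lemma tropdet_set_finite:
  fixes A :: "nat \<Rightarrow> nat \<Rightarrow> nat"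
  shows "finite {(\<Sum>i<s. A i (\<sigma> i)) | \<sigma>. \<sigma> \<in> transversals s t}"
proof -
  have "{(\<Sum>i<s. A i (\<sigma> i)) | \<sigma>. \<sigma> \<in> transversals s t} \<subseteq> {..(\<Sum>i<s. \<Sum>j<t. A i j)}"
  proof
    fix x assume "x \<in> {(\<Sum>i<s. A i (\<sigma> i)) | \<sigma>. \<sigma> \<in> transversals s t}"
    then obtain \<sigma> where x: "x = (\<Sum>i<s. A i (\<sigma> i))" and \<sigma>: "\<sigma> \<in> transversals s t" by blast
    have "A i (\<sigma> i) \<le> (\<Sum>j<t. A i j)" if "i < s" for i
    proof -
      have "\<sigma> i < t" using \<sigma> that unfolding transversals_def by (auto simp: image_subset_iff)
      then show ?thesis by (intro member_le_sum) auto
    qed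
    then have "x \<le> (\<Sum>i<s. \<Sum>j<t. A i j)" unfolding x by (intro sum_mono) auto
    then show "x \<in> {..(\<Sum>i<s. \<Sum>j<t. A i j)}" by simp
  qed
  then show ?thesis using finite_subset by blast
qed

lemma sum_pad:
  fixes N M :: nat
  assumes "N \<le> M"
  shows "(\<Sum>i<M. if i < N then f i else (0::'a::comm_monoid_add)) = (\<Sum>i<N. f i)"
proof -
  have "(\<Sum>i<M. if i < N then f i else 0) = (\<Sum>i<N. if i < N then f i else (0::'a))"
    using assms by (intro sum.mono_neutral_right) auto
  then show ?thesis by simp
qed

lemma tropdet_le:
  assumes "\<sigma> \<in> transversals s t"
  shows "tropdet s t A \<le> (\<Sum>i<s. A i (\<sigma> i))"
  unfolding tropdet_def using assms tropdet_set_finite by (intro Min_le) auto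

lemma tropdet_ge:
  assumes "s \<le> t" "\<And>\<sigma>. \<sigma> \<in> transversals s t \<Longrightarrow> c \<le> (\<Sum>i<s. A i (\<sigma> i))"
  shows "c \<le> tropdet s t A"
proof -
  have "id \<in> transversals s t" using assms(1) unfolding transversals_def by auto
  then have ne: "{(\<Sum>i<s. A i (\<sigma> i)) | \<sigma>. \<sigma> \<in> transversals s t} \<noteq> {}" by blast
  show ?thesis unfolding tropdet_def using assms(2) tropdet_set_finite ne
    by (subst Min_ge_iff) auto
qed

lemma upper:
  fixes k l m n q r :: nat
  assumes "0 < k" and "k \<le> l" and "1 \<le> n"
    and "m = q * n + r" and A: "A \<in> Dkl k l m n"
  shows "int (tropdet (n*k) (n*l) A) \<le> max (int (n*k*q)) (int (n*k*q) + int r * (int k + int l) - int (n*l))"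
proof -
  define N where "N = n*k"
  define M where "M = n*l"
  have NM: "N \<le> M" unfolding N_def M_def using assms by simp
  have N0: "0 < N" unfolding N_def using assms by simp
  have zero: "\<And>i j. (i \<ge> N \<or> j \<ge> M) \<Longrightarrow> A i j = 0"
   and rows: "\<And>i. i < N \<Longrightarrow> (\<Sum>j<M. A i j) = m*l"
   and cols: "\<And>j. j < M \<Longrightarrow> (\<Sum>i<N. A i j) = m*k"
    using A unfolding Dkl_def N_def M_def by auto
  define A' where "A' i j = (if i < N then A i j else 0)" for i j
  obtain \<pi> u v where bij: "bij_betw \<pi> {..<M} {..<M}"
    and feas: "\<forall>i<M. \<forall>j<M. u i + v j \<le> int (A' i j)"
    and wt: "(\<Sum>i<M. int (A' i (\<pi> i))) \<le> (\<Sum>i<M. u i) + (\<Sum>j<M. (v j :: int))"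
    using egervary[of M A'] by blast
  have tr: "\<pi> \<in> transversals N M"
  proof -
    have sub: "{0..<N} \<subseteq> {..<M}" using NM by auto
    have "\<pi> ` {0..<N} \<subseteq> {0..<M}" using sub bij unfolding bij_betw_def
      by (metis image_mono lessThan_atLeast0)
    moreover have "inj_on \<pi> {0..<N}" using inj_on_subset sub bij unfolding bij_betw_def by blast
    ultimately show ?thesis unfolding transversals_def by blast
  qed
  have w1: "(\<Sum>i<M. A' i (\<pi> i)) = (\<Sum>i<N. A i (\<pi> i))"
    unfolding A'_def using sum_pad[OF NM] .
  have td: "int (tropdet N M A) \<le> (\<Sum>i<M. u i) + (\<Sum>j<M. v j)"
  proof -
    have "tropdet N M A \<le> (\<Sum>i<N. A i (\<pi> i))" using tropdet_le[OF tr] .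
    then have "int (tropdet N M A) \<le> (\<Sum>i<M. int (A' i (\<pi> i)))" using w1
      by (metis of_nat_le_iff of_nat_sum)
    then show ?thesis using wt by linarith
  qed
  define X where "X = Max (u ` {..<N})"
  have "X \<in> u ` {..<N}" unfolding X_def using N0 by (intro Max_in) auto
  then obtain i0 where i0: "i0 < N" "u i0 = X" by auto
  have Xge: "u i \<le> X" if "i < N" for i unfolding X_def using that by (intro Max_ge) auto
  define W where "W = Max (v ` {..<M})"
  have "W \<in> v ` {..<M}" unfolding W_def using N0 NM by (intro Max_in) (auto simp: lessThan_empty_iff)
  then obtain j0 where j0: "j0 < M" "v j0 = W" by auto
  have Wge: "v j \<le> W" if "j < M" for j unfolding W_def using that by (intro Max_ge) auto
  have i0M: "i0 < M" using i0 NM by simp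
  have a: "int M * X + (\<Sum>j<M. v j) \<le> int (m*l)"
  proof -
    have "(\<Sum>j<M. X + v j) \<le> (\<Sum>j<M. int (A i0 j))"
      using feas i0 i0M unfolding A'_def by (intro sum_mono) auto
    also have "\<dots> = int (m*l)" using rows[OF i0(1)] by (metis of_nat_sum)
    finally show ?thesis by (simp add: sum.distrib)
  qed
  have b: "(\<Sum>i<M. u i) + int M * W \<le> int (m*k)"
  proof -
    have "(\<Sum>i<M. u i + W) \<le> (\<Sum>i<M. int (A' i j0))"
      using feas j0 by (intro sum_mono) auto
    also have "(\<Sum>i<M. A' i j0) = (\<Sum>i<N. A i j0)"
      unfolding A'_def using sum_pad[OF NM] .
    then have "(\<Sum>i<M. int (A' i j0)) = int (m*k)" using cols[OF j0(1)] by (metis of_nat_sum)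
    finally show ?thesis by (simp add: sum.distrib)
  qed
  have c: "(\<Sum>i<M. u i) \<le> int N * X - int (M - N) * W"
  proof -
    have "(\<Sum>i<M. u i) = (\<Sum>i\<in>{0..<N}. u i) + (\<Sum>i\<in>{N..<M}. u i)"
      using NM by (simp add: lessThan_atLeast0 sum.atLeastLessThan_concat)
    moreover have "(\<Sum>i\<in>{0..<N}. u i) \<le> (\<Sum>i\<in>{0..<N}. X)" using Xge by (intro sum_mono) auto
    moreover have "(\<Sum>i\<in>{N..<M}. u i) \<le> (\<Sum>i\<in>{N..<M}. - W)"
    proof (intro sum_mono)
      fix i assume "i \<in> {N..<M}"
      then have "u i + v j0 \<le> 0" using feas j0 unfolding A'_def by auto
      then show "u i \<le> - W" using j0 by simp
    qed
    ultimately show ?thesis by simp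
  qed
  have d: "(\<Sum>j<M. v j) \<le> int M * W"
  proof -
    have "(\<Sum>j<M. v j) \<le> (\<Sum>j<M. W)" using Wge by (intro sum_mono) auto
    then show ?thesis by simp
  qed
  define L where "L = X + W"
  define V where "V = (\<Sum>i<M. u i) + (\<Sum>j<M. v j)"
  have V1: "V \<le> int N * L" unfolding V_def L_def using c d NM by (simp add: of_nat_diff algebra_simps)
  have V2: "V \<le> int (m*l) + int (m*k) - int M * L" unfolding V_def L_def using a b by (simp add: algebra_simps)
  have "V \<le> max (int (n*k*q)) (int (n*k*q) + int r * (int k + int l) - int (n*l))"
  proof (cases "L \<le> int q")
    case True
    then have "int N * L \<le> int N * int q" by (intro mult_left_mono) auto
    then show ?thesis using V1 unfolding N_def by simp
  next
    case False
    then have "int M * (int q + 1) \<le> int M * L" by (intro mult_left_mono) auto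
    moreover have "int (m*l) + int (m*k) - int M * (int q + 1) = int (n*k*q) + int r * (int k + int l) - int (n*l)"
      unfolding M_def assms(4) by (simp add: algebra_simps)
    ultimately show ?thesis using V2 by linarith
  qed
  then show ?thesis using td unfolding V_def N_def M_def by linarith
qed

definition ov :: "nat \<Rightarrow> nat \<Rightarrow> nat \<Rightarrow> nat \<Rightarrow> nat" where
  "ov a b i j = card ({i*a..<(i+1)*a} \<inter> {j*b..<(j+1)*b})"

lemma UN_intervals: "(\<Union>j<C. {j*b..<(j+1)*b}) = {..<C*(b::nat)}"
proof (induction C)
  case 0 then show ?case by simp
next
  case (Suc C)
  have "(\<Union>j<Suc C. {j*b..<(j+1)*b}) = {C*b..<(C+1)*b} \<union> (\<Union>j<C. {j*b..<(j+1)*b})"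
    by (simp add: lessThan_Suc)
  also have "\<dots> = {..<Suc C * b}" using Suc by auto
  finally show ?case .
qed

lemma ov_row:
  fixes R C a b i :: nat
  assumes "R*a = C*b" "i < R"
  shows "(\<Sum>j<C. ov a b i j) = a"
proof -
  define I where "I = {i*a..<(i+1)*a}"
  have disj: "(I \<inter> {j*b..<(j+1)*b}) \<inter> (I \<inter> {j'*b..<(j'+1)*b}) = {}" if "j \<noteq> j'" for j j' :: nat
  proof -
    have "j+1 \<le> j' \<or> j'+1 \<le> j" using that by linarith
    then have "(j+1)*b \<le> j'*b \<or> (j'+1)*b \<le> j*b" using mult_le_mono1 by blast
    then show ?thesis by auto
  qed
  have "(\<Sum>j<C. ov a b i j) = (\<Sum>j<C. card (I \<inter> {j*b..<(j+1)*b}))" unfolding ov_def I_def by simp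
  also have "\<dots> = card (\<Union>j<C. I \<inter> {j*b..<(j+1)*b})"
    using disj by (intro card_UN_disjoint[symmetric]) auto
  also have "(\<Union>j<C. I \<inter> {j*b..<(j+1)*b}) = I \<inter> {..<C*b}" using UN_intervals by blast
  also have "I \<inter> {..<C*b} = I"
  proof -
    have "(i+1)*a \<le> R*a" using assms(2) by (intro mult_le_mono1) simp
    then show ?thesis unfolding I_def using assms(1) by auto
  qed
  finally show ?thesis unfolding I_def by simp
qed

lemma ov_col:
  fixes R C a b j :: nat
  assumes "R*a = C*b" "j < C"
  shows "(\<Sum>i<R. ov a b i j) = b"
proof -
  have "ov a b i j = ov b a j i" for i unfolding ov_def by (simp add: Int_commute)
  then show ?thesis using ov_row[of C b R a j] assms by simp
qed

lemma sum_split: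
  fixes c M :: nat
  assumes "c \<le> M"
  shows "(\<Sum>j<M. if j < c then f j else g j) = (\<Sum>j<c. f j) + (\<Sum>j\<in>{c..<M}. (g j :: nat))"
proof -
  have "(\<Sum>j<M. if j < c then f j else g j) = (\<Sum>j\<in>{0..<c}. if j < c then f j else g j) + (\<Sum>j\<in>{c..<M}. if j < c then f j else g j)"
    unfolding lessThan_atLeast0 using assms by (intro sum.atLeastLessThan_concat[symmetric]) simp_all
  also have "(\<Sum>j\<in>{0..<c}. if j < c then f j else g j) = (\<Sum>j<c. f j)"
    by (simp add: lessThan_atLeast0)
  also have "(\<Sum>j\<in>{c..<M}. if j < c then f j else g j) = (\<Sum>j\<in>{c..<M}. g j)"
    by (intro sum.cong) auto
  finally show ?thesis .
qed

lemma sum_ind_card: "finite A \<Longrightarrow> (\<Sum>i\<in>A. if P i then 1 else (0::nat)) = card (A \<inter> {i. P i})"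
  by (simp add: sum.If_cases)

lemma constr1:
  fixes k l m n q r :: nat
  assumes "0 < k" "k \<le> l" "1 \<le> n" "m = q*n + r"
  shows "\<exists>A \<in> Dkl k l m n. n*k*q \<le> tropdet (n*k) (n*l) A"
proof -
  define N where "N = n*k"
  define M where "M = n*l"
  have NM: "N \<le> M" unfolding N_def M_def using assms by simp
  have key: "N*(r*l) = M*(r*k)" unfolding N_def M_def by simp
  define A where "A i j = (if i < N \<and> j < M then q + ov (r*l) (r*k) i j else 0)" for i j
  have "A \<in> Dkl k l m n"
    unfolding Dkl_def
  proof (intro CollectI conjI allI impI)
    fix i j assume "n*k \<le> i \<or> n*l \<le> j" then show "A i j = 0" unfolding A_def N_def M_def by auto
  next
    fix i assume i: "i < n*k"
    have "(\<Sum>j<n*l. A i j) = (\<Sum>j<M. q + ov (r*l) (r*k) i j)" unfolding A_def M_def using i N_def by simp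
    also have "\<dots> = M*q + r*l" using ov_row[OF key, of i] i unfolding N_def by (simp add: sum.distrib)
    also have "\<dots> = m*l" unfolding M_def assms(4) by (simp add: algebra_simps)
    finally show "(\<Sum>j<n*l. A i j) = m*l" .
  next
    fix j assume j: "j < n*l"
    have "(\<Sum>i<n*k. A i j) = (\<Sum>i<N. q + ov (r*l) (r*k) i j)" unfolding A_def N_def using j M_def by simp
    also have "\<dots> = N*q + r*k" using ov_col[OF key, of j] j unfolding M_def by (simp add: sum.distrib)
    also have "\<dots> = m*k" unfolding N_def assms(4) by (simp add: algebra_simps)
    finally show "(\<Sum>i<n*k. A i j) = m*k" .
  qed
  moreover have "n*k*q \<le> tropdet (n*k) (n*l) A"
  proof (rule tropdet_ge)
    show "n*k \<le> n*l" using assms by simp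
  next
    fix \<sigma> assume \<sigma>: "\<sigma> \<in> transversals (n*k) (n*l)"
    have "(\<Sum>i<n*k. q) \<le> (\<Sum>i<n*k. A i (\<sigma> i))"
    proof (intro sum_mono)
      fix i assume "i \<in> {..<n*k}"
      moreover then have "\<sigma> i < n*l" using \<sigma> unfolding transversals_def by (auto simp: image_subset_iff)
      ultimately show "q \<le> A i (\<sigma> i)" unfolding A_def N_def M_def by simp
    qed
    then show "n*k*q \<le> (\<Sum>i<n*k. A i (\<sigma> i))" by simp
  qed
  ultimately show ?thesis by blast
qed

lemma constr2:
  fixes k l m n q r :: nat
  assumes "0 < k" "k \<le> l" "1 \<le> n" "m = q*n + r" "r < n" "n*l < r*(k+l)"
  shows "\<exists>A \<in> Dkl k l m n. int (n*k*q) + int r * (int k + int l) - int (n*l) \<le> int (tropdet (n*k) (n*l) A)"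
proof -
  have "r*(k+l) \<le> (2*r)*l" using assms(2) by (simp add: algebra_simps)
  then have "n*l < (2*r)*l" using assms(6) by linarith
  then have n2r: "n < 2*r" by (simp add: mult_less_cancel2)
  define c where "c = n - r"
  define d where "d = r - c"
  have nc: "n = 2*c + d" and rc: "r = c + d" unfolding c_def d_def using n2r assms(5) by auto
  define N where "N = n*k"
  define M where "M = n*l"
  define ck where "ck = c*k"
  define cl where "cl = c*l"
  have NM: "N \<le> M" unfolding N_def M_def using assms by simp
  have ckN: "ck \<le> N" unfolding ck_def N_def nc by simp
  have clM: "cl \<le> M" unfolding cl_def M_def nc by simp
  have key: "ck*(d*l) = cl*(d*k)" unfolding ck_def cl_def by simp
  define E where "E i j = (if i < ck \<and> j < cl then 1 + ov (d*l) (d*k) i j else if ck \<le> i \<and> cl \<le> j then 1 else 0)" for i j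
  define A where "A i j = (if i < N \<and> j < M then q + E i j else 0)" for i j
  have "A \<in> Dkl k l m n"
    unfolding Dkl_def
  proof (intro CollectI conjI allI impI)
    fix i j assume "n*k \<le> i \<or> n*l \<le> j" then show "A i j = 0" unfolding A_def N_def M_def by auto
  next
    fix i assume i: "i < n*k"
    have "(\<Sum>j<n*l. A i j) = (\<Sum>j<M. q + E i j)" unfolding A_def M_def using i N_def by simp
    also have "\<dots> = M*q + (\<Sum>j<M. E i j)" by (simp add: sum.distrib)
    also have "(\<Sum>j<M. E i j) = (c+d)*l"
    proof (cases "i < ck")
      case True
      then have "(\<Sum>j<M. E i j) = (\<Sum>j<M. if j < cl then 1 + ov (d*l) (d*k) i j else 0)"
        unfolding E_def by (intro sum.cong) auto
      also have "\<dots> = (\<Sum>j<cl. 1 + ov (d*l) (d*k) i j)" using sum_split[OF clM] by simp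
      also have "\<dots> = cl + d*l" using ov_row[OF key True] by (simp add: sum_Suc)
      finally show ?thesis unfolding cl_def by (simp add: algebra_simps)
    next
      case False
      then have "(\<Sum>j<M. E i j) = (\<Sum>j<M. if j < cl then 0 else 1)"
        unfolding E_def by (intro sum.cong) auto
      also have "\<dots> = M - cl" using sum_split[OF clM, of "\<lambda>_. 0" "\<lambda>_. 1"] by simp
      finally show ?thesis unfolding cl_def M_def nc by (simp add: algebra_simps)
    qed
    also have "M*q + (c+d)*l = m*l" unfolding M_def assms(4) rc by (simp add: algebra_simps)
    finally show "(\<Sum>j<n*l. A i j) = m*l" .
  next
    fix j assume j: "j < n*l"
    have "(\<Sum>i<n*k. A i j) = (\<Sum>i<N. q + E i j)" unfolding A_def N_def using j M_def by simp
    also have "\<dots> = N*q + (\<Sum>i<N. E i j)" by (simp add: sum.distrib)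
    also have "(\<Sum>i<N. E i j) = (c+d)*k"
    proof (cases "j < cl")
      case True
      then have "(\<Sum>i<N. E i j) = (\<Sum>i<N. if i < ck then 1 + ov (d*l) (d*k) i j else 0)"
        unfolding E_def by (intro sum.cong) auto
      also have "\<dots> = (\<Sum>i<ck. 1 + ov (d*l) (d*k) i j)" using sum_split[OF ckN] by simp
      also have "\<dots> = ck + d*k" using ov_col[OF key True] by (simp add: sum_Suc)
      finally show ?thesis unfolding ck_def by (simp add: algebra_simps)
    next
      case False
      then have "(\<Sum>i<N. E i j) = (\<Sum>i<N. if i < ck then 0 else 1)"
        unfolding E_def by (intro sum.cong) auto
      also have "\<dots> = N - ck" using sum_split[OF ckN, of "\<lambda>_. 0" "\<lambda>_. 1"] by simp
      finally show ?thesis unfolding ck_def N_def nc by (simp add: algebra_simps)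
    qed
    also have "N*q + (c+d)*k = m*k" unfolding N_def assms(4) rc by (simp add: algebra_simps)
    finally show "(\<Sum>i<n*k. A i j) = m*k" .
  qed
  moreover have "nat (int (n*k*q) + int r * (int k + int l) - int (n*l)) \<le> tropdet (n*k) (n*l) A"
  proof (rule tropdet_ge)
    show "n*k \<le> n*l" using assms by simp
  next
    fix \<sigma> assume \<sigma>: "\<sigma> \<in> transversals (n*k) (n*l)"
    have sM: "\<sigma> i < M" if "i < N" for i
      using \<sigma> that unfolding transversals_def N_def M_def by (auto simp: image_subset_iff)
    have inj: "inj_on \<sigma> {..<N}" using \<sigma> unfolding transversals_def N_def by (simp add: lessThan_atLeast0)
    define bad where "bad i = ((i < ck \<and> cl \<le> \<sigma> i) \<or> (ck \<le> i \<and> \<sigma> i < cl))" for i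
    have each: "q + 1 \<le> A i (\<sigma> i) + (if bad i then 1 else 0)" if "i < N" for i
      using sM[OF that] that unfolding A_def E_def bad_def by auto
    have "(\<Sum>i<N. q + 1) \<le> (\<Sum>i<N. A i (\<sigma> i) + (if bad i then 1 else 0))"
      using each by (intro sum_mono) auto
    then have S1: "N*(q+1) \<le> (\<Sum>i<N. A i (\<sigma> i)) + (\<Sum>i<N. if bad i then 1 else 0)"
      by (simp add: sum.distrib)
    have "(\<Sum>i<N. if bad i then 1 else (0::nat)) \<le> (\<Sum>i<N. (if i < ck then 1 else 0) + (if \<sigma> i < cl then 1 else 0))"
      unfolding bad_def by (intro sum_mono) auto
    also have "\<dots> = (\<Sum>i<N. if i < ck then 1 else 0) + (\<Sum>i<N. if \<sigma> i < cl then 1 else 0)"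
      by (simp add: sum.distrib)
    also have "(\<Sum>i<N. if i < ck then 1 else (0::nat)) = ck"
      using sum_split[OF ckN, of "\<lambda>_. 1" "\<lambda>_. 0"] by simp
    also have "(\<Sum>i<N. if \<sigma> i < cl then 1 else (0::nat)) = card ({..<N} \<inter> {i. \<sigma> i < cl})"
      by (rule sum_ind_card) simp
    also have "card ({..<N} \<inter> {i. \<sigma> i < cl}) \<le> card {..<cl}"
      by (rule card_inj_on_le) (auto intro: inj_on_subset[OF inj])
    finally have S2: "(\<Sum>i<N. if bad i then 1 else (0::nat)) \<le> ck + cl" by simp
    have h: "N*(q+1) \<le> (\<Sum>i<N. A i (\<sigma> i)) + ck + cl" using S1 S2 by linarith
    have "int (N*(q+1)) \<le> int ((\<Sum>i<N. A i (\<sigma> i)) + ck + cl)" using h by (simp only: of_nat_le_iff)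
    then have "int N * (int q + 1) - int ck - int cl \<le> int (\<Sum>i<N. A i (\<sigma> i))"
      by (simp only: of_nat_add of_nat_mult of_nat_1)
    moreover have "int N * (int q + 1) - int ck - int cl = int (n*k*q) + int r * (int k + int l) - int (n*l)"
      unfolding N_def ck_def cl_def nc rc by (simp add: algebra_simps)
    ultimately show "nat (int (n*k*q) + int r * (int k + int l) - int (n*l)) \<le> (\<Sum>i<n*k. A i (\<sigma> i))"
      unfolding N_def by linarith
  qed
  ultimately show ?thesis by force
qed

theorem theorem5p3:
  fixes k l m n q r :: nat
  assumes "0 < k" and "k \<le> l" and "gcd k l = 1" and "1 \<le> n"
    and "m = q * n + r" and "r < n"
  shows "int (Ukl k l m n) =
           max (int (n*k*q)) (int (n*k*q) + int r * (int k + int l) - int (n*l))"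
proof -
  define Bi where "Bi = max (int (n*k*q)) (int (n*k*q) + int r * (int k + int l) - int (n*l))"
  define T where "T = {tropdet (n*k) (n*l) A | A. A \<in> Dkl k l m n}"
  have Bpos: "0 \<le> Bi" unfolding Bi_def by (rule order_trans[OF _ max.cobounded1]) simp
  have up: "int y \<le> Bi" if "y \<in> T" for y
    using that upper[OF assms(1,2,4,5)] unfolding T_def Bi_def by blast
  obtain A0 where A0: "A0 \<in> Dkl k l m n" "Bi \<le> int (tropdet (n*k) (n*l) A0)"
  proof (cases "n*l < r*(k+l)")
    case True
    obtain A where A: "A \<in> Dkl k l m n" "int (n*k*q) + int r * (int k + int l) - int (n*l) \<le> int (tropdet (n*k) (n*l) A)"
      using constr2[OF assms(1,2,4,5,6) True] by blast
    have "int (n*l) < int r * (int k + int l)" using True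
      by (metis of_nat_add of_nat_less_iff of_nat_mult)
    then have "Bi = int (n*k*q) + int r * (int k + int l) - int (n*l)" unfolding Bi_def by simp
    then show ?thesis using that A by simp
  next
    case False
    obtain A where A: "A \<in> Dkl k l m n" "n*k*q \<le> tropdet (n*k) (n*l) A"
      using constr1[OF assms(1,2,4,5)] by blast
    have "int r * (int k + int l) \<le> int (n*l)" using False
      by (metis not_less of_nat_add of_nat_le_iff of_nat_mult)
    then have BiEq: "Bi = int (n*k*q)" unfolding Bi_def by simp
    have "Bi \<le> int (tropdet (n*k) (n*l) A)" unfolding BiEq using A(2) by (simp only: of_nat_le_iff)
    then show ?thesis using that A(1) by blast
  qed
  have t0: "tropdet (n*k) (n*l) A0 \<in> T" unfolding T_def using A0(1) by blast
  have eq: "int (tropdet (n*k) (n*l) A0) = Bi" using up[OF t0] A0(2) by simp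
  have fin: "finite T"
  proof -
    have "T \<subseteq> {..nat Bi}" using up by fastforce
    then show ?thesis using finite_subset by blast
  qed
  have "Max T = tropdet (n*k) (n*l) A0"
  proof (rule Max_eqI[OF fin])
    fix y assume "y \<in> T" then show "y \<le> tropdet (n*k) (n*l) A0" using up eq by fastforce
  qed (rule t0)
  then show ?thesis unfolding Ukl_def T_def[symmetric] Bi_def[symmetric] using eq by simp
qed

end
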